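(* Let $\Gamma$ be a set of clauses with designated blocking variables. If a clause $C$ is cost-SR w.r.t. $\Gamma$, then $\mathrm{cost}(\Gamma)=\mathrm{cost}(\Gamma\cup\{C\})$.
   Context: Substitutions map variables to $0$, $1$ or literals ($\sigma(\lnot x)=\lnot\sigma(x)$, $\sigma(0)=0$, $\sigma(1)=1$); $(\sigma\circ\tau)(x)=\sigma(\tau(x))$; total assignments assign Boolean values to all variables. $C{\upharpoonright}_\sigma$: apply $\sigma$ to the literals and simplify ($D\lor0=D$, $D\lor1=1$, merge repeats); $\sigma\models C$ if the result is $1$ or tautological; $\Gamma{\upharpoonright}_\sigma$ is the multiset of $C{\upharpoonright}_\sigma\ne1$, $C\in\Gamma$. $\lnot C$ is the partial assignment falsifying all literals of $C$; $\tau\supseteq\rho$ means extension. $\Gamma\vdash_1 C$ means unit propagation on $\Gamma{\upharpoonright}_{\lnot C}$ derives the empty clause; $\Gamma\vdash_1\Delta$ means this for all $D\in\Delta$. With blocking variables $b_1,\dots,b_m$: $\mathrm{cost}(\alpha)=\sum_i\alpha(b_i)$, $\mathrm{cost}(\Gamma)=\min\{\mathrm{cost}(\alpha):\alpha\models\Gamma\}$. $C$ is cost-SR w.r.t. $\Gamma$ if there is a substitution $\sigma$ with (1) $\Gamma{\upharpoonright}_{\lnot C}\vdash_1(\Gamma\cup\{C\}){\upharpoonright}_\sigma$ and (2) $\mathrm{cost}(\tau\circ\sigma)\le\mathrm{cost}(\tau)$ for every total assignment $\tau\supseteq\lnot C$. *)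

theory Defs
  imports Main "HOL-Library.Extended_Nat"
begin

datatype 'v lit = Pos 'v | Neg 'v

type_synonym 'v clause = "'v lit set"
type_synonym 'v assignment = "'v \<Rightarrow> bool"

fun lneg :: "'v lit \<Rightarrow> 'v lit" where
  "lneg (Pos x) = Neg x" | "lneg (Neg x) = Pos x"

fun lvar :: "'v lit \<Rightarrow> 'v" where
  "lvar (Pos x) = x" | "lvar (Neg x) = x"

fun lit_val :: "'v assignment \<Rightarrow> 'v lit \<Rightarrow> bool" where
  "lit_val \<alpha> (Pos x) = \<alpha> x" | "lit_val \<alpha> (Neg x) = (\<not> \<alpha> x)"

definition sat_clause :: "'v assignment \<Rightarrow> 'v clause \<Rightarrow> bool" where
  "sat_clause \<alpha> C \<longleftrightarrow> (\<exists>l\<in>C. lit_val \<alpha> l)"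

definition sat_cnf :: "'v assignment \<Rightarrow> 'v clause set \<Rightarrow> bool" where
  "sat_cnf \<alpha> \<Gamma> \<longleftrightarrow> (\<forall>C\<in>\<Gamma>. sat_clause \<alpha> C)"

datatype 'v sval = Const bool | Lit "'v lit"

type_synonym 'v subst = "'v \<Rightarrow> 'v sval"

fun sneg :: "'v sval \<Rightarrow> 'v sval" where
  "sneg (Const b) = Const (\<not> b)" | "sneg (Lit l) = Lit (lneg l)"

fun subst_lit :: "'v subst \<Rightarrow> 'v lit \<Rightarrow> 'v sval" where
  "subst_lit \<sigma> (Pos x) = \<sigma> x" | "subst_lit \<sigma> (Neg x) = sneg (\<sigma> x)"

text \<open>Restriction of a clause: None represents the constant 1 (satisfied);
  otherwise the remaining literals (0-literals dropped, repeats merged).\<close>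
definition restrict :: "'v subst \<Rightarrow> 'v clause \<Rightarrow> 'v clause option" where
  "restrict \<sigma> C =
     (if \<exists>l\<in>C. subst_lit \<sigma> l = Const True then None
      else Some {l'. \<exists>l\<in>C. subst_lit \<sigma> l = Lit l'})"

definition restrict_cnf :: "'v subst \<Rightarrow> 'v clause set \<Rightarrow> 'v clause set" where
  "restrict_cnf \<sigma> \<Gamma> = {D. \<exists>C\<in>\<Gamma>. restrict \<sigma> C = Some D}"

fun sval_val :: "'v assignment \<Rightarrow> 'v sval \<Rightarrow> bool" where
  "sval_val \<tau> (Const b) = b" | "sval_val \<tau> (Lit l) = lit_val \<tau> l"

definition comp_assign :: "'v assignment \<Rightarrow> 'v subst \<Rightarrow> 'v assignment" where
  "comp_assign \<tau> \<sigma> = (\<lambda>x. sval_val \<tau> (\<sigma> x))"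

text \<open>The partial assignment not-C falsifying all literals of C, as a substitution
  (unassigned variables are mapped to themselves).\<close>
definition neg_clause :: "'v clause \<Rightarrow> 'v subst" where
  "neg_clause C = (\<lambda>x. if Pos x \<in> C then Const False
                       else if Neg x \<in> C then Const True else Lit (Pos x))"

definition extends_neg :: "'v assignment \<Rightarrow> 'v clause \<Rightarrow> bool" where
  "extends_neg \<tau> C \<longleftrightarrow> (\<forall>l\<in>C. \<not> lit_val \<tau> l)"

definition unit_subst :: "'v lit \<Rightarrow> 'v subst" where
  "unit_subst l = (\<lambda>x. if x = lvar l then Const (l = Pos x) else Lit (Pos x))"

inductive up_refutes :: "'v clause set \<Rightarrow> bool" where
  empty: "{} \<in> F \<Longrightarrow> up_refutes F"
| unit: "{l} \<in> F \<Longrightarrow> up_refutes (restrict_cnf (unit_subst l) F) \<Longrightarrow> up_refutes F"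

definition rup :: "'v clause set \<Rightarrow> 'v clause \<Rightarrow> bool" where
  "rup \<Gamma> C \<longleftrightarrow> up_refutes (restrict_cnf (neg_clause C) \<Gamma>)"

definition cost_assign :: "'v set \<Rightarrow> 'v assignment \<Rightarrow> nat" where
  "cost_assign B \<alpha> = card {b\<in>B. \<alpha> b}"

text \<open>Minimum cost of a satisfying assignment; infinity if unsatisfiable.\<close>
definition cost_cnf :: "'v set \<Rightarrow> 'v clause set \<Rightarrow> enat" where
  "cost_cnf B \<Gamma> = (INF \<alpha>\<in>{\<alpha>. sat_cnf \<alpha> \<Gamma>}. enat (cost_assign B \<alpha>))"

definition cost_SR :: "'v set \<Rightarrow> 'v clause set \<Rightarrow> 'v clause \<Rightarrow> bool" where
  "cost_SR B \<Gamma> C \<longleftrightarrow>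
     (\<exists>\<sigma>. (\<forall>D\<in>restrict_cnf \<sigma> (insert C \<Gamma>). rup (restrict_cnf (neg_clause C) \<Gamma>) D)
        \<and> (\<forall>\<tau>. extends_neg \<tau> C \<longrightarrow> cost_assign B (comp_assign \<tau> \<sigma>) \<le> cost_assign B \<tau>))"

end

theory Submission
  imports Defs
begin

lemma sneg_val: "sval_val \<tau> (sneg v) = (\<not> sval_val \<tau> v)"
proof (cases v)
  case (Lit l) then show ?thesis by (cases l) auto
qed auto

lemma lit_comp: "lit_val (comp_assign \<tau> \<sigma>) l = sval_val \<tau> (subst_lit \<sigma> l)"
  by (cases l) (auto simp: comp_assign_def sneg_val)

lemma restrict_sound:
  assumes "sat_cnf \<alpha> G" and "\<And>x. sval_val \<alpha> (\<rho> x) = \<alpha> x"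
  shows "sat_cnf \<alpha> (restrict_cnf \<rho> G)"
proof -
  have ca: "comp_assign \<alpha> \<rho> = \<alpha>" using assms(2) by (auto simp: comp_assign_def)
  show ?thesis
    unfolding sat_cnf_def restrict_cnf_def
  proof (intro ballI, clarify)
    fix D' D assume D: "D \<in> G" "restrict \<rho> D = Some D'"
    then obtain l where l: "l \<in> D" "lit_val \<alpha> l" using assms(1) by (auto simp: sat_cnf_def sat_clause_def)
    have v: "sval_val \<alpha> (subst_lit \<rho> l)" using l(2) lit_comp[of \<alpha> \<rho> l] ca by simp
    have nt: "\<forall>l\<in>D. subst_lit \<rho> l \<noteq> Const True" and D'eq: "D' = {l'. \<exists>l\<in>D. subst_lit \<rho> l = Lit l'}"
      using D(2) by (auto simp: restrict_def split: if_splits)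
    show "sat_clause \<alpha> D'"
    proof (cases "subst_lit \<rho> l")
      case (Const b) then show ?thesis using v nt l(1) by auto
    next
      case (Lit l') then show ?thesis using v l(1) D'eq by (auto simp: sat_clause_def)
    qed
  qed
qed

lemma up_sound: "up_refutes F \<Longrightarrow> \<not> sat_cnf \<alpha> F"
proof (induction rule: up_refutes.induct)
  case (empty F) then show ?case by (auto simp: sat_cnf_def sat_clause_def)
next
  case (unit l F)
  show ?case
  proof
    assume s: "sat_cnf \<alpha> F"
    then have "lit_val \<alpha> l" using unit(1) by (auto simp: sat_cnf_def sat_clause_def)
    then have "\<And>x. sval_val \<alpha> (unit_subst l x) = \<alpha> x"
      by (cases l) (auto simp: unit_subst_def)
    then have "sat_cnf \<alpha> (restrict_cnf (unit_subst l) F)" using restrict_sound s by blast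
    then show False using unit(3) by blast
  qed
qed

theorem lemma3p7:
  fixes B :: "'v set" and \<Gamma> :: "'v clause set" and C :: "'v clause"
  assumes "finite B"
    and "finite \<Gamma>" and "\<forall>D\<in>\<Gamma>. finite D" and "finite C"
    and "cost_SR B \<Gamma> C"
  shows "cost_cnf B \<Gamma> = cost_cnf B (insert C \<Gamma>)"
proof (rule antisym)
  show "cost_cnf B \<Gamma> \<le> cost_cnf B (insert C \<Gamma>)"
    unfolding cost_cnf_def by (rule INF_superset_mono) (auto simp: sat_cnf_def)
next
  obtain \<sigma> where r: "\<forall>D\<in>restrict_cnf \<sigma> (insert C \<Gamma>). rup (restrict_cnf (neg_clause C) \<Gamma>) D"
    and c: "\<forall>\<tau>. extends_neg \<tau> C \<longrightarrow> cost_assign B (comp_assign \<tau> \<sigma>) \<le> cost_assign B \<tau>"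
    using assms(5) by (auto simp: cost_SR_def)
  have key: "cost_cnf B (insert C \<Gamma>) \<le> enat (cost_assign B \<alpha>)" if a: "sat_cnf \<alpha> \<Gamma>" for \<alpha>
  proof (cases "sat_clause \<alpha> C")
    case True
    then have "sat_cnf \<alpha> (insert C \<Gamma>)" using a by (auto simp: sat_cnf_def)
    then show ?thesis unfolding cost_cnf_def by (auto intro: INF_lower2)
  next
    case False
    then have en: "extends_neg \<alpha> C" by (auto simp: extends_neg_def sat_clause_def)
    have "\<And>x. sval_val \<alpha> (neg_clause C x) = \<alpha> x"
      using en by (auto simp: neg_clause_def extends_neg_def; force)
    then have sG: "sat_cnf \<alpha> (restrict_cnf (neg_clause C) \<Gamma>)" using restrict_sound a by blast
    have "sat_clause (comp_assign \<alpha> \<sigma>) D" if D: "D \<in> insert C \<Gamma>" for D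
    proof (cases "\<exists>l\<in>D. subst_lit \<sigma> l = Const True")
      case True
      then show ?thesis by (auto simp: sat_clause_def lit_comp) (metis sval_val.simps(1))
    next
      case False
      define D' where "D' = {l'. \<exists>l\<in>D. subst_lit \<sigma> l = Lit l'}"
      have "restrict \<sigma> D = Some D'" using False by (simp add: restrict_def D'_def)
      then have "D' \<in> restrict_cnf \<sigma> (insert C \<Gamma>)" using D by (auto simp: restrict_cnf_def)
      then have ru: "up_refutes (restrict_cnf (neg_clause D') (restrict_cnf (neg_clause C) \<Gamma>))"
        using r by (auto simp: rup_def)
      have "sat_clause \<alpha> D'"
      proof (rule ccontr)
        assume ns: "\<not> sat_clause \<alpha> D'"
        have "\<And>x. sval_val \<alpha> (neg_clause D' x) = \<alpha> x"
          using ns by (auto simp: neg_clause_def sat_clause_def; force)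
        then have "sat_cnf \<alpha> (restrict_cnf (neg_clause D') (restrict_cnf (neg_clause C) \<Gamma>))"
          using restrict_sound sG by blast
        then show False using up_sound ru by blast
      qed
      then obtain l' where "l' \<in> D'" "lit_val \<alpha> l'" by (auto simp: sat_clause_def)
      then show ?thesis by (auto simp: D'_def sat_clause_def lit_comp) (metis sval_val.simps(2))
    qed
    then have "sat_cnf (comp_assign \<alpha> \<sigma>) (insert C \<Gamma>)" by (auto simp: sat_cnf_def)
    then have "cost_cnf B (insert C \<Gamma>) \<le> enat (cost_assign B (comp_assign \<alpha> \<sigma>))"
      unfolding cost_cnf_def by (auto intro: INF_lower2)
    also have "\<dots> \<le> enat (cost_assign B \<alpha>)" using c en by auto
    finally show ?thesis .
  qed
  show "cost_cnf B (insert C \<Gamma>) \<le> cost_cnf B \<Gamma>"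
    unfolding cost_cnf_def[of B \<Gamma>] by (rule INF_greatest) (use key in auto)
qed

end
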